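(* Let $k\in\mathbb{R}$, $T$ large, and suppose $t\in\mathcal{S}$. Let $W_0=20|k|V_0$. Then as $X\to\infty$, \[ P_X(\tfrac12+it)^k=\big(1+O(e^{-19|k|V_0})\big)D(t,k), \] where $D(t,k)=\sum_{n\in S(X)}\alpha_k(n)n^{-1/2-it}$ and the coefficients $\alpha_k(n)$ satisfy: (i) $\alpha_k(n)$ is supported on integers $n\leqslant X^{W_0}$ and $|\alpha_k(n)|\leqslant d_{|k|}(n)$; (ii) there is a multiplicative function $\beta_k$ such that $\alpha_k(n)=\beta_k(n)$ whenever $\Omega(n)\leqslant W_0$, with $\beta_k(n)=d_k(n)$ whenever every prime power $p^m$ dividing $n$ satisfies $p^m\leqslant X$, and $|\beta_k(n)|\leqslant d_{|k|}(n)$ for all $n$.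
   Context: $\Lambda$ is the von Mangoldt function and $P_X(s)=\exp\big(\sum_{n\leqslant X}\frac{\Lambda(n)}{n^s\log n}\big)$. Let $F(t)=\sum_{n\leqslant X}\frac{\Lambda(n)}{n^{1/2+it}\log n}$, $V_0=(\log\log T)(\log\log\log T)$ and $\mathcal{S}=\{t\in[T,2T]:|\Re F(t)|\leqslant V_0,\ |\Im F(t)|\leqslant V_0\}$. The Dirichlet polynomial $D(t,k)$ is the truncated exponential series $\sum_{0\leqslant j\leqslant W_0}\frac{k^j}{j!}F(t)^j$, and $\alpha_k(n)$ are its coefficients when written as $\sum_n\alpha_k(n)n^{-1/2-it}$. $S(X)$ is the set of positive integers all of whose prime factors are $\leqslant X$. $\Omega(n)$ is the number of prime factors of $n$ counted with multiplicity. For real $k$, $d_k(n)$ is the multiplicative function with $\sum_nd_k(n)n^{-s}=\zeta(s)^k$. *)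

theory Defs
  imports "HOL-Analysis.Analysis" "HOL-Number_Theory.Number_Theory"
begin

definition mangoldt :: "nat \<Rightarrow> real" where
  "mangoldt n = (if primepow n then ln (real (aprimedivisor n)) else 0)"

definition bigOmega :: "nat \<Rightarrow> nat" where
  "bigOmega n = size (prime_factorization n)"

text \<open>Generalised divisor function d_k for real k: multiplicative, with
  d_k(p^m) = k(k+1)...(k+m-1)/m!, i.e. the coefficients of zeta(s)^k.\<close>
definition dk :: "real \<Rightarrow> nat \<Rightarrow> real" where
  "dk k n = (\<Prod>p\<in>prime_factors n. pochhammer k (multiplicity p n) / fact (multiplicity p n))"

definition multiplicative_fun :: "(nat \<Rightarrow> real) \<Rightarrow> bool" where
  "multiplicative_fun f \<longleftrightarrow> f 1 = 1 \<and> (\<forall>m n. m > 0 \<longrightarrow> n > 0 \<longrightarrow> coprime m n \<longrightarrow> f (m * n) = f m * f n)"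

definition smooth_set :: "real \<Rightarrow> nat set" where
  "smooth_set X = {n. n > 0 \<and> (\<forall>p\<in>prime_factors n. real p \<le> X)}"

definition Fpoly :: "real \<Rightarrow> real \<Rightarrow> complex" where
  "Fpoly X t = (\<Sum>n\<in>{2..nat \<lfloor>X\<rfloor>}. complex_of_real (mangoldt n / ln (real n)) *
                  (of_nat n) powr (- (1/2 + \<i> * complex_of_real t)))"

definition PXpow :: "real \<Rightarrow> real \<Rightarrow> complex \<Rightarrow> complex" where
  "PXpow X k s = exp (complex_of_real k * (\<Sum>n\<in>{2..nat \<lfloor>X\<rfloor>}.
       complex_of_real (mangoldt n / ln (real n)) * (of_nat n) powr (- s)))"

definition V0 :: "real \<Rightarrow> real" where
  "V0 T = ln (ln T) * ln (ln (ln T))"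

definition W0 :: "real \<Rightarrow> real \<Rightarrow> real" where
  "W0 k T = 20 * \<bar>k\<bar> * V0 T"

definition Sset :: "real \<Rightarrow> real \<Rightarrow> real set" where
  "Sset X T = {t. T \<le> t \<and> t \<le> 2 * T \<and> \<bar>Re (Fpoly X t)\<bar> \<le> V0 T \<and> \<bar>Im (Fpoly X t)\<bar> \<le> V0 T}"

definition Dpoly :: "real \<Rightarrow> real \<Rightarrow> real \<Rightarrow> real \<Rightarrow> complex" where
  "Dpoly X k T t = (\<Sum>j\<in>{j::nat. real j \<le> W0 k T}.
       complex_of_real (k ^ j / fact j) * Fpoly X t ^ j)"

text \<open>Dirichlet-convolution powers of the coefficient function
  b(n) = Lambda(n)/log n * [n <= X]; apow X j n is the n-th coefficient of F^j.\<close>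
fun apow :: "real \<Rightarrow> nat \<Rightarrow> nat \<Rightarrow> real" where
  "apow X 0 n = (if n = 1 then 1 else 0)"
| "apow X (Suc j) n = (\<Sum>d\<in>{d. d dvd n}.
      (if 2 \<le> d \<and> real d \<le> X then mangoldt d / ln (real d) else 0) * apow X j (n div d))"

text \<open>alpha_k(n): coefficients of D(t,k) = sum_n alpha_k(n) n^{-1/2-it}\<close>
definition alpha :: "real \<Rightarrow> real \<Rightarrow> real \<Rightarrow> nat \<Rightarrow> real" where
  "alpha X k T n = (\<Sum>j\<in>{j::nat. real j \<le> W0 k T}. k ^ j / fact j * apow X j n)"

end

theory Submission
  imports Defs "HOL-Computational_Algebra.Formal_Power_Series"
begin

unbundle no vec_syntax
notation fps_nth (infixl \<open>$\<close> 75)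





lemma mangoldt_eq: "Defs.mangoldt n = (Prime_Powers.mangoldt n :: real)"
  by (simp add: Defs.mangoldt_def Prime_Powers.mangoldt_def)

definition bcoef :: "real \<Rightarrow> nat \<Rightarrow> real" where
  "bcoef X d = (if 2 \<le> d \<and> real d \<le> X then Defs.mangoldt d / ln (real d) else 0)"

lemma apow_Suc': "apow X (Suc j) n = (\<Sum>d\<in>{d. d dvd n}. bcoef X d * apow X j (n div d))"
  by (simp add: bcoef_def)

declare apow.simps(2)[simp del]

lemma bcoef_nonneg: "0 \<le> bcoef X d"
  by (auto simp: bcoef_def mangoldt_eq intro!: divide_nonneg_nonneg mangoldt_nonneg)

lemma bcoef_nonprimepow: "\<not> primepow d \<Longrightarrow> bcoef X d = 0"
  by (simp add: bcoef_def Defs.mangoldt_def)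

lemma bcoef_mono: "X \<le> Y \<Longrightarrow> bcoef X d \<le> bcoef Y d"
  by (auto simp: bcoef_def mangoldt_eq intro!: divide_nonneg_nonneg mangoldt_nonneg)

lemma apow_zero [simp]: "apow X j 0 = 0"
  by (cases j) (auto simp: apow_Suc')

lemma apow_nonneg: "0 \<le> apow X j n"
  by (induction j arbitrary: n) (auto simp: apow_Suc' intro!: sum_nonneg mult_nonneg_nonneg bcoef_nonneg)

lemma apow_mono: "X \<le> Y \<Longrightarrow> apow X j n \<le> apow Y j n"
proof (induction j arbitrary: n)
  case 0 then show ?case by simp
next
  case (Suc j)
  show ?case unfolding apow_Suc'
    by (intro sum_mono mult_mono bcoef_mono Suc apow_nonneg bcoef_nonneg)
qed

lemma bigOmega_mult: "a > 0 \<Longrightarrow> b > 0 \<Longrightarrow> bigOmega (a * b) = bigOmega a + bigOmega b"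
  by (simp add: bigOmega_def prime_factorization_mult)

lemma bigOmega_pos: "d \<ge> 2 \<Longrightarrow> bigOmega d \<ge> 1"
proof -
  assume "d \<ge> 2"
  then obtain p where "prime p" "p dvd d" using prime_factor_nat[of d] by auto
  then have "p \<in># prime_factorization d" using \<open>d \<ge> 2\<close>
    by (simp add: in_prime_factors_iff)
  then show ?thesis unfolding bigOmega_def
    using nonempty_has_size[of "prime_factorization d"] by auto
qed

lemma bigOmega_1 [simp]: "bigOmega 1 = 0" by (simp add: bigOmega_def)

lemma bigOmega_primepow: "prime p \<Longrightarrow> bigOmega (p ^ m) = m"
  by (simp add: bigOmega_def prime_factorization_prime_power)

lemma apow_support:
  assumes "apow X j n \<noteq> 0"
  shows "n > 0 \<and> j \<le> bigOmega n \<and> n \<le> nat \<lfloor>X\<rfloor> ^ j \<and> (\<forall>p\<in>prime_factors n. real p \<le> X)"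
  using assms
proof (induction j arbitrary: n)
  case 0 then show ?case by (auto split: if_splits)
next
  case (Suc j)
  have nz: "n \<noteq> 0" by (rule ccontr) (use Suc.prems in simp)
  from Suc.prems obtain d where d: "d dvd n" "bcoef X d * apow X j (n div d) \<noteq> 0"
    unfolding apow_Suc' by (elim sum.not_neutral_contains_not_neutral) simp
  then have d2: "2 \<le> d" "real d \<le> X" and ap: "apow X j (n div d) \<noteq> 0"
    by (auto simp: bcoef_def split: if_splits)
  from Suc.IH[OF ap] have IH: "n div d > 0" "j \<le> bigOmega (n div d)" "n div d \<le> nat \<lfloor>X\<rfloor> ^ j"
      "\<forall>p\<in>prime_factors (n div d). real p \<le> X" by auto
  have ndec: "n = d * (n div d)" using d(1) by simp
  have "bigOmega n = bigOmega d + bigOmega (n div d)"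
    using ndec bigOmega_mult[of d "n div d"] d2 IH(1) by (metis not_numeral_le_zero not_gr_zero) 
  moreover have "bigOmega d \<ge> 1" using bigOmega_pos d2 by auto
  moreover have "d \<le> nat \<lfloor>X\<rfloor>" using d2 by (simp add: le_nat_floor)
  then have "d * (n div d) \<le> nat \<lfloor>X\<rfloor> * nat \<lfloor>X\<rfloor> ^ j" using IH(3) by (intro mult_mono) auto
  moreover have "\<forall>p\<in>prime_factors n. real p \<le> X"
  proof
    fix p assume p: "p \<in> prime_factors n"
    then have pp: "prime p" "p dvd d * (n div d)" using ndec nz by (auto simp: in_prime_factors_iff)
    then consider "p dvd d" | "p dvd n div d" using prime_dvd_mult_iff by blast
    then show "real p \<le> X"
    proof cases
      case 1 then have "p \<le> d" using d2 by (intro dvd_imp_le) auto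
      then show ?thesis using d2 by linarith
    next
      case 2 then show ?thesis using IH(4) IH(1) pp(1) by (auto simp: in_prime_factors_iff)
    qed
  qed
  ultimately show ?case using nz ndec IH(2) by (auto simp: algebra_simps)
qed




definition Efps :: "real \<Rightarrow> nat \<Rightarrow> real fps" where
  "Efps X n = Abs_fps (\<lambda>j. apow X j n / fact j)"

lemma Efps_nth: "Efps X n $ j = apow X j n / fact j"
  by (simp add: Efps_def)

lemma Efps_deriv:
  assumes "n > 0"
  shows "fps_deriv (Efps X n) = (\<Sum>d\<in>{d. d dvd n}. fps_const (bcoef X d) * Efps X (n div d))"
proof (rule fps_ext)
  fix j
  have "fps_deriv (Efps X n) $ j = apow X (Suc j) n / fact j"
    by (simp add: Efps_nth field_simps del: of_nat_Suc)
  also have "\<dots> = (\<Sum>d\<in>{d. d dvd n}. bcoef X d * (apow X j (n div d) / fact j))"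
    by (simp add: apow_Suc' sum_divide_distrib)
  also have "\<dots> = (\<Sum>d\<in>{d. d dvd n}. fps_const (bcoef X d) * Efps X (n div d)) $ j"
    by (simp add: fps_sum_nth Efps_nth)
  finally show "fps_deriv (Efps X n) $ j = (\<Sum>d\<in>{d. d dvd n}. fps_const (bcoef X d) * Efps X (n div d)) $ j" .
qed

lemma primepow_dvd_coprime:
  fixes d m1 m2 :: nat
  assumes "primepow d" "d dvd m1 * m2" "coprime m1 m2"
  shows "d dvd m1 \<or> d dvd m2"
proof -
  obtain p k where pk: "prime p" "k > 0" "d = p ^ k" using assms(1) by (auto simp: primepow_def)
  have "p dvd d" using pk(2,3) by simp
  then have "p dvd m1 * m2" using assms(2) by (rule dvd_trans)
  then consider "p dvd m1" | "p dvd m2" using pk(1) prime_dvd_mult_iff by blast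
  then show ?thesis
  proof cases
    case 1
    then have "coprime p m2" using assms(3) coprime_divisors[of p m1 m2 m2] by simp
    then have "coprime d m2" using pk by simp
    then show ?thesis using assms(2) coprime_dvd_mult_left_iff by blast
  next
    case 2
    then have "coprime p m1" using assms(3) coprime_divisors[of p m2 m1 m1] by (simp add: coprime_commute)
    then have "coprime d m1" using pk by simp
    then show ?thesis using assms(2) coprime_dvd_mult_right_iff by blast
  qed
qed

lemma split_sum:
  fixes g :: "nat \<Rightarrow> 'a::ab_group_add"
  assumes "coprime m1 m2" "m1 > 0" "m2 > 0" "\<And>d. \<not> primepow d \<Longrightarrow> g d = 0"
  shows "(\<Sum>d\<in>{d. d dvd m1 * m2}. g d) = (\<Sum>d\<in>{d. d dvd m1}. g d) + (\<Sum>d\<in>{d. d dvd m2}. g d)"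
proof -
  let ?D = "{d. d dvd m1 * m2}" and ?D1 = "{d. d dvd m1}" and ?D2 = "{d. d dvd m2}"
  have fin: "finite ?D" "finite ?D1" "finite ?D2" using assms by auto
  have "sum g ?D = sum g (?D1 \<union> ?D2)"
  proof (rule sum.mono_neutral_right[OF fin(1)])
    show "?D1 \<union> ?D2 \<subseteq> ?D" by auto
    show "\<forall>i\<in>?D - (?D1 \<union> ?D2). g i = 0"
      using primepow_dvd_coprime[OF _ _ assms(1)] assms(4) by blast
  qed
  also have "?D1 \<inter> ?D2 = {1}" using assms(1)
    by (auto dest: coprime_common_divisor)
  then have "sum g (?D1 \<union> ?D2) = sum g ?D1 + sum g ?D2 - g 1"
    using sum.union_inter[OF fin(2,3), of g] by (simp add: algebra_simps)
  also have "g 1 = 0" using assms(4)[of 1] by simp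
  finally show ?thesis by simp
qed

lemma Efps_1_nth0: "Efps X n $ 0 = (if n = 1 then 1 else 0)"
  by (simp add: Efps_nth)

lemma Efps_mult:
  assumes "coprime m1 m2" "m1 > 0" "m2 > 0"
  shows "Efps X (m1 * m2) = Efps X m1 * Efps X m2"
proof -
  have "\<forall>m1 m2. coprime m1 m2 \<longrightarrow> m1 > 0 \<longrightarrow> m2 > 0 \<longrightarrow>
          Efps X (m1 * m2) $ j = (Efps X m1 * Efps X m2) $ j" for j
  proof (induction j)
    case 0 then show ?case by (auto simp: Efps_1_nth0)
  next
    case (Suc j)
    show ?case
    proof (intro allI impI)
      fix m1 m2 :: nat assume cop: "coprime m1 m2" and pos: "m1 > 0" "m2 > 0"
      let ?E = "Efps X"
      have "fps_deriv (?E (m1 * m2)) $ j = (\<Sum>d\<in>{d. d dvd m1 * m2}. bcoef X d * ?E (m1 * m2 div d) $ j)"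
        using pos by (simp add: Efps_deriv fps_sum_nth)
      also have "\<dots> = (\<Sum>d\<in>{d. d dvd m1}. bcoef X d * ?E (m1 * m2 div d) $ j)
                    + (\<Sum>d\<in>{d. d dvd m2}. bcoef X d * ?E (m1 * m2 div d) $ j)"
        by (rule split_sum[OF cop pos]) (simp add: bcoef_nonprimepow)
      also have "(\<Sum>d\<in>{d. d dvd m1}. bcoef X d * ?E (m1 * m2 div d) $ j)
               = (\<Sum>d\<in>{d. d dvd m1}. bcoef X d * (?E (m1 div d) * ?E m2) $ j)"
      proof (rule sum.cong[OF refl])
        fix d assume "d \<in> {d. d dvd m1}"
        then have d: "d dvd m1" by simp
        then have eq: "m1 * m2 div d = (m1 div d) * m2" by (simp add: dvd_div_mult)
        have "m1 div d dvd m1" using dvd_mult_div_cancel[OF d] dvd_triv_right by metis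
        then have "coprime (m1 div d) m2" using cop coprime_divisors[of "m1 div d" m1 m2 m2] by simp
        moreover have "m1 div d > 0" using d pos dvd_div_eq_0_iff[OF d] by simp
        ultimately show "bcoef X d * ?E (m1 * m2 div d) $ j = bcoef X d * (?E (m1 div d) * ?E m2) $ j"
          using Suc.IH pos eq by simp
      qed
      also have "\<dots> = (fps_deriv (?E m1) * ?E m2) $ j"
        using pos by (simp add: Efps_deriv sum_distrib_right fps_sum_nth mult.assoc)
      also have "(\<Sum>d\<in>{d. d dvd m2}. bcoef X d * ?E (m1 * m2 div d) $ j)
               = (\<Sum>d\<in>{d. d dvd m2}. bcoef X d * (?E m1 * ?E (m2 div d)) $ j)"
      proof (rule sum.cong[OF refl])
        fix d assume "d \<in> {d. d dvd m2}"
        then have d: "d dvd m2" by simp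
        then have eq: "m1 * m2 div d = m1 * (m2 div d)" by (simp add: div_mult_swap)
        have "m2 div d dvd m2" using dvd_mult_div_cancel[OF d] dvd_triv_right by metis
        then have "coprime m1 (m2 div d)" using cop coprime_divisors[of m1 m1 "m2 div d" m2] by simp
        moreover have "m2 div d > 0" using d pos dvd_div_eq_0_iff[OF d] by simp
        ultimately show "bcoef X d * ?E (m1 * m2 div d) $ j = bcoef X d * (?E m1 * ?E (m2 div d)) $ j"
          using Suc.IH pos eq by simp
      qed
      also have "\<dots> = (?E m1 * fps_deriv (?E m2)) $ j"
      proof -
        have "?E m1 * fps_deriv (?E m2) = (\<Sum>d\<in>{d. d dvd m2}. fps_const (bcoef X d) * (?E m1 * ?E (m2 div d)))"
          using pos unfolding Efps_deriv[OF pos(2)] sum_distrib_left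
          by (intro sum.cong refl) (rule mult.left_commute)
        then show ?thesis by (simp add: fps_sum_nth)
      qed
      finally have "fps_deriv (?E (m1 * m2)) $ j = fps_deriv (?E m1 * ?E m2) $ j"
        by (simp add: algebra_simps)
      then show "?E (m1 * m2) $ Suc j = (?E m1 * ?E m2) $ Suc j"
        by (simp del: of_nat_Suc fps_deriv_mult)
    qed
  qed
  then show ?thesis using assms by (intro fps_ext) blast
qed




definition Lfps :: "real fps" where
  "Lfps = Abs_fps (\<lambda>n. if n = 0 then 0 else 1 / real n)"

lemma Lfps_nth: "Lfps $ n = (if n = 0 then 0 else 1 / real n)"
  by (simp add: Lfps_def)

lemma bcoef_primepow:
  assumes p: "prime p" and le: "real (p ^ i) \<le> X"
  shows "bcoef X (p ^ i) = Lfps $ i"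
proof (cases "i = 0")
  case True then show ?thesis by (simp add: bcoef_def Lfps_nth)
next
  case False
  have p1: "p > 1" using p prime_gt_1_nat by blast
  have "p ^ i \<ge> p" using False p1 by (simp add: self_le_power)
  then have "2 \<le> p ^ i" using p1 by linarith
  moreover have "ln (real (p ^ i)) = real i * ln (real p)" using p1 by (simp add: ln_realpow)
  moreover have "ln (real p) > 0" using p1 by simp
  ultimately show ?thesis using le False p
    by (simp add: bcoef_def Lfps_nth mangoldt_eq)
qed

lemma apow_primepow:
  assumes p: "prime p"
  shows "real (p ^ m) \<le> X \<Longrightarrow> apow X j (p ^ m) = (Lfps ^ j) $ m"
proof (induction j arbitrary: m)
  case 0
  have p1: "p > 1" using p prime_gt_1_nat by blast
  then show ?case by (simp add: nat_power_eq_Suc_0_iff)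
next
  case (Suc j)
  have p1: "p > 1" using p prime_gt_1_nat by blast
  have dv: "{d. d dvd p ^ m} = (\<lambda>i. p ^ i) ` {..m}"
    using divides_primepow_nat[OF p] by auto
  have inj: "inj_on (\<lambda>i. p ^ i) {..m}"
    using p1 by (auto simp: inj_on_def power_inject_exp)
  have "apow X (Suc j) (p ^ m) = (\<Sum>i\<le>m. bcoef X (p ^ i) * apow X j (p ^ m div p ^ i))"
    unfolding apow_Suc' dv by (simp add: sum.reindex[OF inj])
  also have "\<dots> = (\<Sum>i\<le>m. Lfps $ i * (Lfps ^ j) $ (m - i))"
  proof (rule sum.cong[OF refl])
    fix i assume i: "i \<in> {..m}"
    have "real (p ^ i) \<le> real (p ^ m)" using i p1 by (simp add: power_increasing)
    then have "bcoef X (p ^ i) = Lfps $ i" using Suc.prems bcoef_primepow[OF p] by simp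
    moreover have "p ^ m div p ^ i = p ^ (m - i)" using i p1 by (simp add: power_diff)
    moreover have "real (p ^ (m - i)) \<le> real (p ^ m)" using i p1 by (simp add: power_increasing)
    then have "apow X j (p ^ (m - i)) = (Lfps ^ j) $ (m - i)" using Suc.prems Suc.IH by simp
    ultimately show "bcoef X (p ^ i) * apow X j (p ^ m div p ^ i) = Lfps $ i * (Lfps ^ j) $ (m - i)"
      by simp
  qed
  also have "\<dots> = (Lfps ^ Suc j) $ m"
    by (simp add: fps_mult_nth atLeast0AtMost)
  finally show ?case .
qed

lemma aux_field:
  fixes F M P k :: real
  assumes "F \<noteq> 0" "M + 1 \<noteq> 0"
  shows "P / F + k * P / ((M + 1) * F) = (k + 1 + M) * P / ((M + 1) * F)"
proof -
  have "(k + 1 + M) * P / ((M + 1) * F) = ((M+1) * P + k * P) / ((M + 1) * F)"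
    by (simp add: algebra_simps)
  also have "\<dots> = (M+1)*P/((M+1)*F) + k*P/((M+1)*F)" by (rule add_divide_distrib)
  also have "(M+1)*P/((M+1)*F) = P/F" using assms by simp
  finally show ?thesis by simp
qed

lemma poch_sum: "(\<Sum>i\<le>m. pochhammer (k::real) i / fact i) = pochhammer (k + 1) m / fact m"
proof (induction m)
  case 0 then show ?case by simp
next
  case (Suc m)
  have "(\<Sum>i\<le>Suc m. pochhammer k i / fact i) = pochhammer (k + 1) m / fact m + pochhammer k (Suc m) / fact (Suc m)"
    using Suc by simp
  also have "\<dots> = pochhammer (k + 1) (Suc m) / fact (Suc m)"
  proof -
    have h1: "pochhammer k (Suc m) = k * pochhammer (k+1) m" by (rule pochhammer_rec)
    have h2: "pochhammer (k+1) (Suc m) = (k + 1 + real m) * pochhammer (k+1) m"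
      by (rule pochhammer_rec')
    have F: "(fact m :: real) \<noteq> 0" "real m + 1 \<noteq> 0" by auto
    have fs: "(fact (Suc m) :: real) = (real m + 1) * fact m" by (simp add: fact_Suc)
    show ?thesis unfolding h1 h2 fs using aux_field[OF F] by (simp add: mult.assoc)
  qed
  finally show ?case .
qed

lemma Hfps_nth: "(fps_exp k oo Lfps) $ m = pochhammer (k::real) m / fact m"
proof -
  let ?H = "fps_exp k oo Lfps"
  have L0: "Lfps $ 0 = 0" by (simp add: Lfps_nth)
  have dL: "fps_deriv Lfps = Abs_fps (\<lambda>_. 1)"
    by (rule fps_ext) (simp add: Lfps_nth del: of_nat_Suc)
  have "fps_deriv ?H = (fps_const k * fps_exp k oo Lfps) * fps_deriv Lfps"
    by (simp add: fps_compose_deriv[OF L0])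
  also have "\<dots> = fps_const k * ?H * Abs_fps (\<lambda>_. 1)"
    by (simp add: fps_const_mult_apply_left dL)
  finally have dH: "fps_deriv ?H = fps_const k * ?H * Abs_fps (\<lambda>_. 1)" .
  have rec: "real (Suc m) * ?H $ Suc m = k * (\<Sum>i\<le>m. ?H $ i)" for m
  proof -
    have "fps_deriv ?H $ m = real (Suc m) * ?H $ Suc m" by simp
    also have "fps_deriv ?H $ m = k * (\<Sum>i\<le>m. ?H $ i)"
      unfolding dH mult.assoc fps_mult_left_const_nth by (simp add: fps_mult_nth atLeast0AtMost)
    finally show ?thesis by simp
  qed
  show ?thesis
  proof (induction m rule: less_induct)
    case (less m)
    show ?case
    proof (cases m)
      case 0 then show ?thesis by (simp add: fps_compose_nth)
    next
      case (Suc m')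
      have "(\<Sum>i\<le>m'. ?H $ i) = (\<Sum>i\<le>m'. pochhammer k i / fact i)"
        using less Suc by (intro sum.cong) auto
      also have "\<dots> = pochhammer (k + 1) m' / fact m'" by (rule poch_sum)
      finally have "real (Suc m') * ?H $ Suc m' = k * (pochhammer (k + 1) m' / fact m')"
        using rec[of m'] by simp
      then have "?H $ Suc m' = k * pochhammer (k + 1) m' / (real (Suc m') * fact m')"
        by (simp add: field_simps del: of_nat_Suc)
      also have "\<dots> = pochhammer k (Suc m') / fact (Suc m')"
        by (simp add: pochhammer_rec del: of_nat_Suc)
      finally show ?thesis using Suc by simp
    qed
  qed
qed

definition beta :: "real \<Rightarrow> real \<Rightarrow> nat \<Rightarrow> real" where
  "beta X k n = (\<Sum>j\<le>bigOmega n. Efps X n $ j * k ^ j)"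

lemma Efps_vanish: "n > 0 \<Longrightarrow> j > bigOmega n \<Longrightarrow> Efps X n $ j = 0"
  using apow_support[of X j n] by (auto simp: Efps_nth)

lemma beta_ext:
  assumes "n > 0" "bigOmega n \<le> N"
  shows "beta X k n = (\<Sum>j\<le>N. Efps X n $ j * k ^ j)"
  unfolding beta_def using assms
  by (intro sum.mono_neutral_left) (auto simp: Efps_vanish)

lemma beta_mult:
  assumes "coprime m1 m2" "m1 > 0" "m2 > 0"
  shows "beta X k (m1 * m2) = beta X k m1 * beta X k m2"
proof -
  have "beta X k m1 * beta X k m2 =
        (\<Sum>r\<le>bigOmega m1 + bigOmega m2. (\<Sum>i\<le>r. Efps X m1 $ i * Efps X m2 $ (r - i)) * k ^ r)"
    unfolding beta_def
    by (rule polynomial_product) (use assms in \<open>auto simp: Efps_vanish\<close>)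
  also have "\<dots> = (\<Sum>r\<le>bigOmega (m1 * m2). Efps X (m1 * m2) $ r * k ^ r)"
    using assms by (simp add: bigOmega_mult Efps_mult fps_mult_nth atLeast0AtMost)
  finally show ?thesis by (simp add: beta_def)
qed

lemma beta_1: "beta X k 1 = 1"
  unfolding beta_def bigOmega_1 by (simp add: Efps_nth)

lemma multiplicative_beta: "multiplicative_fun (beta X k)"
  unfolding multiplicative_fun_def using beta_1 beta_mult by auto

lemma beta_primepow:
  assumes p: "prime p" and le: "real (p ^ m) \<le> X"
  shows "beta X k (p ^ m) = pochhammer k m / fact m"
proof -
  have "beta X k (p ^ m) = (\<Sum>j\<le>m. (Lfps ^ j) $ m / fact j * k ^ j)"
    unfolding beta_def bigOmega_primepow[OF p]
    by (simp add: Efps_nth apow_primepow[OF p le])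
  also have "\<dots> = (fps_exp k oo Lfps) $ m"
    by (simp add: fps_compose_nth atLeast0AtMost field_simps)
  finally show ?thesis by (simp add: Hfps_nth)
qed

lemma multiplicative_prod_aux:
  assumes "multiplicative_fun f" "finite A" "\<forall>p\<in>A. prime p"
  shows "f (\<Prod>p\<in>A. p ^ e p) = (\<Prod>p\<in>A. f (p ^ e p))"
  using assms(2,3)
proof (induction A rule: finite_induct)
  case empty then show ?case using assms(1) by (simp add: multiplicative_fun_def)
next
  case (insert x A)
  have "coprime x p" if "p \<in> A" for p using insert that by (intro primes_coprime) auto
  then have cop: "coprime (x ^ e x) (\<Prod>p\<in>A. p ^ e p)"
    by (intro prod_coprime_right) auto
  have pos1: "x ^ e x > 0" using insert by (simp add: prime_gt_0_nat)
  have pos2: "(\<Prod>p\<in>A. p ^ e p) > 0" using insert by (simp add: prime_gt_0_nat)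
  show ?case using insert assms(1) cop pos1 pos2 by (simp add: multiplicative_fun_def)
qed

lemma multiplicative_prod:
  assumes "multiplicative_fun f" "n > 0"
  shows "f n = (\<Prod>p\<in>prime_factors n. f (p ^ multiplicity p n))"
proof -
  have "n = (\<Prod>p\<in>prime_factors n. p ^ multiplicity p n)"
    using prod_prime_factors[of n] assms(2) by simp
  then have "f n = f (\<Prod>p\<in>prime_factors n. p ^ multiplicity p n)" by simp
  also have "\<dots> = (\<Prod>p\<in>prime_factors n. f (p ^ multiplicity p n))"
    by (rule multiplicative_prod_aux[OF assms(1)]) auto
  finally show ?thesis .
qed

lemma beta_dk:
  assumes "n > 0" "\<forall>p m. prime p \<longrightarrow> m \<ge> 1 \<longrightarrow> p ^ m dvd n \<longrightarrow> real (p ^ m) \<le> X"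
  shows "beta X k n = dk k n"
proof -
  have "beta X k n = (\<Prod>p\<in>prime_factors n. beta X k (p ^ multiplicity p n))"
    by (rule multiplicative_prod[OF multiplicative_beta assms(1)])
  also have "\<dots> = (\<Prod>p\<in>prime_factors n. pochhammer k (multiplicity p n) / fact (multiplicity p n))"
  proof (rule prod.cong[OF refl])
    fix p assume p: "p \<in> prime_factors n"
    then have pp: "prime p" "multiplicity p n \<ge> 1" using assms(1)
      by (auto simp: prime_factors_multiplicity)
    then have "real (p ^ multiplicity p n) \<le> X" using assms(2) multiplicity_dvd by blast
    then show "beta X k (p ^ multiplicity p n) = pochhammer k (multiplicity p n) / fact (multiplicity p n)"
      using beta_primepow[OF pp(1)] by blast
  qed
  finally show ?thesis by (simp add: dk_def)
qed

lemma beta_abs_le: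
  assumes "n > 0"
  shows "\<bar>beta X k n\<bar> \<le> dk \<bar>k\<bar> n"
proof -
  define Y where "Y = max X (real n)"
  have "\<bar>beta X k n\<bar> \<le> (\<Sum>j\<le>bigOmega n. \<bar>Efps X n $ j * k ^ j\<bar>)"
    unfolding beta_def by (rule sum_abs)
  also have "\<dots> \<le> (\<Sum>j\<le>bigOmega n. Efps Y n $ j * \<bar>k\<bar> ^ j)"
    by (intro sum_mono) (auto simp: Efps_nth abs_mult power_abs apow_nonneg Y_def
        intro!: mult_right_mono divide_right_mono apow_mono)
  also have "\<dots> = beta Y \<bar>k\<bar> n" by (simp add: beta_def)
  also have "\<dots> = dk \<bar>k\<bar> n"
  proof (rule beta_dk[OF assms])
    show "\<forall>p m. prime p \<longrightarrow> m \<ge> 1 \<longrightarrow> p ^ m dvd n \<longrightarrow> real (p ^ m) \<le> Y"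
    proof (intro allI impI)
      fix p m assume "prime p" "m \<ge> 1" "p ^ m dvd n"
      then have "p ^ m \<le> n" using assms by (intro dvd_imp_le) auto
      then have "real (p ^ m) \<le> real n" by linarith
      then show "real (p ^ m) \<le> Y" unfolding Y_def by linarith
    qed
  qed
  finally show ?thesis .
qed




lemma powr_nat_mult: "(of_nat (d * n) :: complex) powr z = of_nat d powr z * of_nat n powr z"
  using powr_times_real[of "of_nat d" "of_nat n" z] by simp

lemma powr_nat_mult': "(of_nat d * of_nat n :: complex) powr z = of_nat d powr z * of_nat n powr z"
  using powr_nat_mult[of d n z] by simp

lemma one_powr_complex: "(1::complex) powr z = 1"
  by (simp add: powr_def)

lemma dirichlet_mult:
  fixes f g :: "nat \<Rightarrow> complex"
  assumes f0: "\<And>d. d > A \<Longrightarrow> f d = 0" and g0: "\<And>n. n > B \<Longrightarrow> g n = 0"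
  shows "(\<Sum>d\<in>{1..A}. f d * of_nat d powr z) * (\<Sum>n\<in>{1..B}. g n * of_nat n powr z)
       = (\<Sum>N\<in>{1..A*B}. (\<Sum>d\<in>{d. d dvd N}. f d * g (N div d)) * of_nat N powr z)"
proof -
  define h where "h = (\<lambda>(d,n). f d * g n * of_nat (d * n) powr z)"
  define G where "G = (\<lambda>(N,d). f d * g (N div d) * of_nat N powr z)"
  define Sg where "Sg = (SIGMA N:{1..A*B}. {d. d dvd N})"
  define P where "P = {(N,d). (N,d) \<in> Sg \<and> d \<le> A \<and> N div d \<le> B}"
  have "(\<Sum>d\<in>{1..A}. f d * of_nat d powr z) * (\<Sum>n\<in>{1..B}. g n * of_nat n powr z)
        = (\<Sum>d\<in>{1..A}. \<Sum>n\<in>{1..B}. h (d, n))"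
    by (simp add: sum_product h_def powr_nat_mult' algebra_simps)
  also have "\<dots> = sum h ({1..A} \<times> {1..B})"
    unfolding sum.cartesian_product by simp
  also have "\<dots> = sum G P"
  proof (rule sum.reindex_bij_witness[of _ "\<lambda>(N,d). (d, N div d)" "\<lambda>(d,n). (d*n, d)"])
    fix a assume "a \<in> {1..A} \<times> {1..B}"
    then show "(case case a of (d, n) \<Rightarrow> (d * n, d) of (N, d) \<Rightarrow> (d, N div d)) = a" by auto
  next
    fix a assume a: "a \<in> {1..A} \<times> {1..B}"
    then obtain d n where dn: "a = (d, n)" "1 \<le> d" "d \<le> A" "1 \<le> n" "n \<le> B" by auto
    have "d * n \<le> A * B" using dn by (intro mult_le_mono) auto
    moreover have "1 \<le> d * n" using dn by simp
    ultimately show "(case a of (d, n) \<Rightarrow> (d * n, d)) \<in> P"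
      using dn by (auto simp: P_def Sg_def)
  next
    fix b assume "b \<in> P"
    then show "(case case b of (N, d) \<Rightarrow> (d, N div d) of (d, n) \<Rightarrow> (d * n, d)) = b"
      by (auto simp: P_def Sg_def)
  next
    fix b assume b: "b \<in> P"
    then obtain N d where Nd: "b = (N, d)" "1 \<le> N" "d dvd N" "d \<le> A" "N div d \<le> B"
      by (auto simp: P_def Sg_def)
    have "d > 0" using Nd by (intro Nat.gr0I) auto
    moreover have "d \<le> N" using Nd by (intro dvd_imp_le) auto
    ultimately have "N div d \<ge> 1" by (simp add: Suc_le_eq div_greater_zero_iff)
    then show "(case b of (N, d) \<Rightarrow> (d, N div d)) \<in> {1..A} \<times> {1..B}"
      using Nd \<open>d > 0\<close> by auto
  next
    fix a assume "a \<in> {1..A} \<times> {1..B}"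
    then show "G (case a of (d, n) \<Rightarrow> (d * n, d)) = h a"
      by (auto simp: h_def G_def)
  qed
  also have "\<dots> = sum G Sg"
  proof (rule sum.mono_neutral_left)
    show "finite Sg" unfolding Sg_def by (intro finite_SigmaI) auto
    show "P \<subseteq> Sg" by (auto simp: P_def)
    show "\<forall>i\<in>Sg - P. G i = 0"
    proof
      fix i assume i: "i \<in> Sg - P"
      obtain N d where Nd: "i = (N,d)" by (cases i)
      from i have "\<not> d \<le> A \<or> \<not> N div d \<le> B" by (auto simp: P_def Nd)
      then show "G i = 0" using f0 g0 by (auto simp: G_def Nd not_le)
    qed
  qed
  also have "\<dots> = (\<Sum>N\<in>{1..A*B}. (\<Sum>d\<in>{d. d dvd N}. f d * g (N div d)) * of_nat N powr z)"
    unfolding Sg_def G_def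
    by (subst sum.Sigma[symmetric]) (auto simp: sum_distrib_right)
  finally show ?thesis .
qed

definition Fz :: "real \<Rightarrow> complex \<Rightarrow> complex" where
  "Fz X z = (\<Sum>n\<in>{2..nat \<lfloor>X\<rfloor>}. complex_of_real (Defs.mangoldt n / ln (real n)) * (of_nat n) powr z)"

lemma Fpoly_Fz: "Fpoly X t = Fz X (- (1/2 + \<i> * complex_of_real t))"
  by (simp add: Fpoly_def Fz_def)

lemma PXpow_Fz: "PXpow X k s = exp (complex_of_real k * Fz X (- s))"
  by (simp add: PXpow_def Fz_def)

lemma le_natfloor_iff: "n \<ge> 1 \<Longrightarrow> (n \<le> nat \<lfloor>X\<rfloor>) = (real n \<le> X)"
proof
  assume n: "n \<ge> 1" "n \<le> nat \<lfloor>X\<rfloor>"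
  then have "int n \<le> \<lfloor>X\<rfloor>" by linarith
  then have "real_of_int (int n) \<le> X" by (simp only: le_floor_iff[symmetric])
  then show "real n \<le> X" by simp
next
  assume "real n \<le> X"
  then show "n \<le> nat \<lfloor>X\<rfloor>" by (rule le_nat_floor)
qed

lemma bcoef_big: "d > nat \<lfloor>X\<rfloor> \<Longrightarrow> bcoef X d = 0"
  using le_natfloor_iff[of d X] by (auto simp: bcoef_def)

lemma Fz_alt: "Fz X z = (\<Sum>n\<in>{1..nat \<lfloor>X\<rfloor>}. complex_of_real (bcoef X n) * of_nat n powr z)"
proof -
  have "Fz X z = (\<Sum>n\<in>{2..nat \<lfloor>X\<rfloor>}. complex_of_real (bcoef X n) * of_nat n powr z)"
    unfolding Fz_def
  proof (intro sum.cong refl)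
    fix n assume "n \<in> {2..nat \<lfloor>X\<rfloor>}"
    then have "2 \<le> n" "real n \<le> X" using le_natfloor_iff[of n X] by auto
    then show "complex_of_real (Defs.mangoldt n / ln (real n)) * of_nat n powr z =
               complex_of_real (bcoef X n) * of_nat n powr z" by (simp add: bcoef_def)
  qed
  also have "\<dots> = (\<Sum>n\<in>{1..nat \<lfloor>X\<rfloor>}. complex_of_real (bcoef X n) * of_nat n powr z)"
    by (rule sum.mono_neutral_left) (auto simp: bcoef_def)
  finally show ?thesis .
qed

lemma apow_big: "n > nat \<lfloor>X\<rfloor> ^ j \<Longrightarrow> apow X j n = 0"
  using apow_support[of X j n] by force

lemma Fz_power:
  assumes "nat \<lfloor>X\<rfloor> \<ge> 1"
  shows "Fz X z ^ j = (\<Sum>n\<in>{1..nat \<lfloor>X\<rfloor> ^ j}. complex_of_real (apow X j n) * of_nat n powr z)"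
proof (induction j)
  case 0 then show ?case by (simp add: one_powr_complex)
next
  case (Suc j)
  have "Fz X z ^ Suc j = Fz X z * Fz X z ^ j" by simp
  also have "\<dots> = (\<Sum>N\<in>{1..nat \<lfloor>X\<rfloor> * nat \<lfloor>X\<rfloor> ^ j}.
      (\<Sum>d\<in>{d. d dvd N}. complex_of_real (bcoef X d) * complex_of_real (apow X j (N div d))) * of_nat N powr z)"
    unfolding Suc.IH by (subst Fz_alt, rule dirichlet_mult) (auto simp: bcoef_big apow_big)
  also have "\<dots> = (\<Sum>n\<in>{1..nat \<lfloor>X\<rfloor> ^ Suc j}. complex_of_real (apow X (Suc j) n) * of_nat n powr z)"
    by (simp add: apow_Suc')
  finally show ?case .
qed

lemma finite_Jset: "finite {j::nat. real j \<le> W}"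
  by (rule finite_subset[of _ "{..nat \<lceil>W\<rceil>}"]) (auto, linarith)

lemma apow_in_S:
  assumes X: "X \<ge> 1" and j: "real j \<le> W" and nz: "apow X j n \<noteq> 0"
  shows "n \<in> smooth_set X \<and> real n \<le> X powr W"
proof -
  from apow_support[OF nz] have s: "n > 0" "n \<le> nat \<lfloor>X\<rfloor> ^ j" "\<forall>p\<in>prime_factors n. real p \<le> X" by auto
  have "real n \<le> real (nat \<lfloor>X\<rfloor>) ^ j" using s(2) by (metis of_nat_le_iff of_nat_power)
  also have "\<dots> \<le> X ^ j" using X by (intro power_mono) auto
  also have "\<dots> = X powr real j" using X by (simp add: powr_realpow)
  also have "\<dots> \<le> X powr W" using X j by (intro powr_mono) auto
  finally show ?thesis using s by (auto simp: smooth_set_def)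
qed

lemma finite_Sset:
  "finite {n \<in> smooth_set X. real n \<le> Y}"
  by (rule finite_subset[of _ "{..nat \<lceil>Y\<rceil>}"]) (auto, linarith)

lemma Fz_power_S:
  assumes X: "X \<ge> 1" and j: "real j \<le> W"
  shows "Fz X z ^ j = (\<Sum>n\<in>{n \<in> smooth_set X. real n \<le> X powr W}. complex_of_real (apow X j n) * of_nat n powr z)"
proof -
  let ?S = "{n \<in> smooth_set X. real n \<le> X powr W}"
  let ?g = "\<lambda>n. complex_of_real (apow X j n) * of_nat n powr z"
  have K: "nat \<lfloor>X\<rfloor> \<ge> 1" using X by linarith
  have "Fz X z ^ j = sum ?g {1..nat \<lfloor>X\<rfloor> ^ j}" by (rule Fz_power[OF K])
  also have "\<dots> = sum ?g ({1..nat \<lfloor>X\<rfloor> ^ j} \<union> ?S)"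
  proof (rule sum.mono_neutral_left)
    show "finite ({1..nat \<lfloor>X\<rfloor> ^ j} \<union> ?S)" by (simp add: finite_Sset)
    show "{1..nat \<lfloor>X\<rfloor> ^ j} \<subseteq> {1..nat \<lfloor>X\<rfloor> ^ j} \<union> ?S" by auto
    show "\<forall>i\<in>{1..nat \<lfloor>X\<rfloor> ^ j} \<union> ?S - {1..nat \<lfloor>X\<rfloor> ^ j}. ?g i = 0"
    proof
      fix i assume i: "i \<in> {1..nat \<lfloor>X\<rfloor> ^ j} \<union> ?S - {1..nat \<lfloor>X\<rfloor> ^ j}"
      then have "i > 0" by (auto simp: smooth_set_def)
      with i have "\<not> i \<le> nat \<lfloor>X\<rfloor> ^ j" by auto
      then have "apow X j i = 0" using apow_support[of X j i] by auto
      then show "?g i = 0" by simp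
    qed
  qed
  also have "\<dots> = sum ?g ?S"
  proof (rule sum.mono_neutral_right)
    show "finite ({1..nat \<lfloor>X\<rfloor> ^ j} \<union> ?S)" by (simp add: finite_Sset)
    show "?S \<subseteq> {1..nat \<lfloor>X\<rfloor> ^ j} \<union> ?S" by auto
    show "\<forall>i\<in>{1..nat \<lfloor>X\<rfloor> ^ j} \<union> ?S - ?S. ?g i = 0"
      using apow_in_S[OF X j] by auto
  qed
  finally show ?thesis .
qed

lemma Dpoly_expand:
  assumes X: "X \<ge> 1"
  shows "Dpoly X k T t = (\<Sum>n\<in>{n\<in>smooth_set X. real n \<le> X powr W0 k T}.
          complex_of_real (alpha X k T n) * (of_nat n) powr (- (1/2 + \<i> * complex_of_real t)))"
proof -
  let ?z = "- (1/2 + \<i> * complex_of_real t)"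
  let ?S = "{n\<in>smooth_set X. real n \<le> X powr W0 k T}"
  let ?J = "{j::nat. real j \<le> W0 k T}"
  have "Dpoly X k T t = (\<Sum>j\<in>?J. complex_of_real (k ^ j / fact j) *
          (\<Sum>n\<in>?S. complex_of_real (apow X j n) * of_nat n powr ?z))"
    unfolding Dpoly_def Fpoly_Fz by (intro sum.cong refl) (simp add: Fz_power_S[OF X])
  also have "\<dots> = (\<Sum>n\<in>?S. \<Sum>j\<in>?J. complex_of_real (k ^ j / fact j * apow X j n) * of_nat n powr ?z)"
    by (subst sum.swap) (simp add: sum_distrib_left mult.assoc)
  also have "\<dots> = (\<Sum>n\<in>?S. complex_of_real (alpha X k T n) * of_nat n powr ?z)"
    by (simp add: alpha_def sum_distrib_right)
  finally show ?thesis .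
qed

lemma alpha_support:
  assumes X: "X \<ge> 1" and nz: "alpha X k T n \<noteq> 0"
  shows "n \<in> smooth_set X \<and> real n \<le> X powr W0 k T"
proof -
  from nz obtain j where "real j \<le> W0 k T" "k ^ j / fact j * apow X j n \<noteq> 0"
    unfolding alpha_def by (elim sum.not_neutral_contains_not_neutral) simp
  then show ?thesis using apow_in_S[OF X] by auto
qed

lemma alpha_beta:
  assumes "n > 0" "real (bigOmega n) \<le> W0 k T"
  shows "alpha X k T n = beta X k n"
proof -
  have "alpha X k T n = (\<Sum>j\<le>bigOmega n. k ^ j / fact j * apow X j n)"
    unfolding alpha_def
  proof (rule sum.mono_neutral_right)
    show "finite {j::nat. real j \<le> W0 k T}" by (rule finite_Jset)
    show "{..bigOmega n} \<subseteq> {j::nat. real j \<le> W0 k T}" using assms(2) by auto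
    show "\<forall>i\<in>{j::nat. real j \<le> W0 k T} - {..bigOmega n}. k ^ i / fact i * apow X i n = 0"
      using apow_support[of X _ n] by force
  qed
  also have "\<dots> = beta X k n" unfolding beta_def Efps_nth by (intro sum.cong refl) simp
  finally show ?thesis .
qed

lemma alpha_abs_le:
  assumes "n > 0"
  shows "\<bar>alpha X k T n\<bar> \<le> dk \<bar>k\<bar> n"
proof -
  let ?J = "{j::nat. real j \<le> W0 k T}"
  let ?f = "\<lambda>j. \<bar>k\<bar> ^ j / fact j * apow X j n"
  have fnn: "?f j \<ge> 0" for j by (simp add: apow_nonneg)
  have "\<bar>alpha X k T n\<bar> \<le> (\<Sum>j\<in>?J. \<bar>k ^ j / fact j * apow X j n\<bar>)"
    unfolding alpha_def by (rule sum_abs)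
  also have "\<dots> = sum ?f ?J" by (simp add: abs_mult power_abs apow_nonneg)
  also have "\<dots> \<le> sum ?f (?J \<union> {..bigOmega n})"
    by (rule sum_mono2) (auto simp: finite_Jset intro!: divide_nonneg_nonneg mult_nonneg_nonneg apow_nonneg)
  also have "\<dots> = sum ?f {..bigOmega n}"
  proof (rule sum.mono_neutral_right)
    show "finite (?J \<union> {..bigOmega n})" by (simp add: finite_Jset)
    show "\<forall>i\<in>?J \<union> {..bigOmega n} - {..bigOmega n}. ?f i = 0"
      using apow_support[of X _ n] by force
  qed auto
  also have "\<dots> = beta X \<bar>k\<bar> n" unfolding beta_def Efps_nth by (intro sum.cong refl) simp
  also have "\<dots> \<le> dk \<bar>k\<bar> n" using beta_abs_le[OF assms, of X "\<bar>k\<bar>"] by simp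
  finally show ?thesis .
qed




lemma exp_tail:
  fixes z :: complex
  shows "norm (exp z - (\<Sum>j<N. z ^ j /\<^sub>R fact j)) \<le> exp (10 * norm z) / 10 ^ N"
proof -
  define S where "S = (\<lambda>M. \<Sum>j<M. z ^ j /\<^sub>R fact j)"
  define r where "r = norm z"
  have r0: "r \<ge> 0" by (simp add: r_def)
  have lim: "S \<longlonglongrightarrow> exp z"
    using exp_converges[of z] by (simp add: sums_def S_def)
  have bound: "norm (S M - S N) \<le> exp (10 * r) / 10 ^ N" if M: "M \<ge> N" for M
  proof -
    have "S M - S N = (\<Sum>j\<in>{N..<M}. z ^ j /\<^sub>R fact j)"
      unfolding S_def using M
      by (metis atLeast0LessThan sum_diff_nat_ivl zero_le)
    then have "norm (S M - S N) \<le> (\<Sum>j\<in>{N..<M}. norm (z ^ j /\<^sub>R fact j))"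
      by (simp add: sum_norm_le)
    also have "\<dots> = (\<Sum>j\<in>{N..<M}. r ^ j / fact j)"
      by (simp add: r_def norm_power divide_inverse mult.commute)
    also have "\<dots> \<le> (\<Sum>j\<in>{N..<M}. (10 * r) ^ j / fact j / 10 ^ N)"
    proof (rule sum_mono)
      fix j assume j: "j \<in> {N..<M}"
      have "(10::real) ^ N \<le> 10 ^ j" using j by (intro power_increasing) auto
      then have "10 ^ N * r ^ j \<le> 10 ^ j * r ^ j" using r0 by (intro mult_right_mono) auto
      then have "r ^ j \<le> (10 * r) ^ j / 10 ^ N"
        by (simp add: power_mult_distrib field_simps)
      then show "r ^ j / fact j \<le> (10 * r) ^ j / fact j / 10 ^ N"
        by (simp add: divide_right_mono field_simps)
    qed
    also have "\<dots> \<le> (\<Sum>j<M. (10 * r) ^ j / fact j / 10 ^ N)"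
      by (rule sum_mono2) (use r0 in auto)
    also have "\<dots> = (\<Sum>j<M. (10 * r) ^ j / fact j) / 10 ^ N"
      by (simp add: sum_divide_distrib)
    also have "(\<Sum>j<M. (10 * r) ^ j / fact j) \<le> exp (10 * r)"
    proof -
      have sm: "(\<lambda>n. (10 * r) ^ n / fact n) sums exp (10 * r)"
        using exp_converges[of "10 * r"] by (simp add: divide_inverse mult.commute)
      show ?thesis
        using sum_le_suminf[OF sums_summable[OF sm], of "{..<M}"] sums_unique[OF sm] r0 by simp
    qed
    then have "(\<Sum>j<M. (10 * r) ^ j / fact j) / 10 ^ N \<le> exp (10 * r) / 10 ^ N"
      by (simp add: divide_right_mono)
    finally show ?thesis .
  qed
  have "(\<lambda>M. norm (S M - S N)) \<longlonglongrightarrow> norm (exp z - S N)"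
    by (intro tendsto_norm tendsto_diff lim tendsto_const)
  then have "norm (exp z - S N) \<le> exp (10 * r) / 10 ^ N"
    by (rule Lim_bounded[where M = N]) (use bound in auto)
  then show ?thesis by (simp add: S_def r_def)
qed

lemma ln10_ge: "ln (10::real) \<ge> 9 / 4"
proof -
  have "exp (1::real) ^ 9 \<le> (272/100) ^ 9"
    using e_less_272 by (intro power_mono) auto
  also have "\<dots> \<le> 10 ^ 4" by (simp add: power_divide divide_le_eq)
  finally have "exp (9::real) \<le> 10 ^ 4"
    using exp_of_nat_mult[of 9 "1::real"] by simp
  moreover have "exp (9::real) = exp (9/4) ^ 4"
    using exp_of_nat_mult[of 4 "9/4::real"] by simp
  ultimately have "exp (9/4::real) ^ 4 \<le> 10 ^ 4" by simp
  then have "exp (9/4::real) \<le> 10"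
    using power_mono_iff[of "exp (9/4::real)" 10 4] by simp
  then show ?thesis
    by (metis exp_gt_zero ln_exp ln_le_cancel_iff zero_less_numeral)
qed

lemma exp_approx:
  fixes z :: complex and a :: real
  assumes z: "norm z \<le> 2 * a" and a: "a \<ge> 1" and N: "real N > 20 * a"
  shows "\<exists>\<epsilon>. norm \<epsilon> \<le> 2 * exp (-19 * a) \<and> exp z = (1 + \<epsilon>) * (\<Sum>j<N. z ^ j /\<^sub>R fact j)"
proof -
  define D where "D = (\<Sum>j<N. z ^ j /\<^sub>R fact j)"
  define tl where "tl = exp z - D"
  have "(10::real) ^ N = exp (real N * ln 10)"
    by (simp add: exp_of_nat_mult)
  also have "exp (real N * ln 10) \<ge> exp (45 * a)"
  proof -
    have "45 * a = (20 * a) * (9/4)" by simp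
    also have "\<dots> \<le> real N * ln 10"
      using N a ln10_ge by (intro mult_mono) auto
    finally show ?thesis by simp
  qed
  finally have p10: "(10::real) ^ N \<ge> exp (45 * a)" .
  have "norm tl \<le> exp (10 * norm z) / 10 ^ N"
    unfolding tl_def D_def by (rule exp_tail)
  also have "\<dots> \<le> exp (20 * a) / exp (45 * a)"
    using z p10 by (intro frac_le) auto
  also have "\<dots> = exp (-25 * a)"
    by (simp add: exp_diff[symmetric])
  finally have tlb: "norm tl \<le> exp (-25 * a)" .
  have "norm (exp z) = exp (Re z)" by simp
  also have "exp (Re z) \<ge> exp (-(2 * a))"
    using z abs_Re_le_cmod[of z] by simp
  finally have ez: "norm (exp z) \<ge> exp (-2 * a)" by simp
  have small: "exp (-23 * a) \<le> 1/2"
  proof -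
    have "exp (23 * a) \<ge> 1 + 23 * a" by (rule exp_ge_add_one_self)
    then have "exp (23 * a) \<ge> 2" using a by linarith
    then show ?thesis by (simp add: exp_minus field_simps)
  qed
  have e25: "exp (-25 * a) = exp (-23 * a) * exp (-2 * a)"
    by (simp add: exp_add[symmetric])
  have "exp (-25 * a) \<le> exp (-2 * a) / 2"
    using small unfolding e25 by (simp add: field_simps)
  have Dlow: "norm D \<ge> exp (-2 * a) / 2"
  proof -
    have "exp z = D + tl" by (simp add: tl_def)
    then have "norm (exp z) \<le> norm D + norm tl" by (metis norm_triangle_ineq)
    then show ?thesis using ez tlb \<open>exp (-25 * a) \<le> exp (-2 * a) / 2\<close> by linarith
  qed
  then have Dnz: "D \<noteq> 0" by (metis exp_gt_zero half_gt_zero norm_zero not_le)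
  define \<epsilon> where "\<epsilon> = tl / D"
  have "exp z = (1 + \<epsilon>) * D" using Dnz by (simp add: \<epsilon>_def tl_def field_simps)
  moreover have "norm \<epsilon> \<le> 2 * exp (-19 * a)"
  proof -
    have "norm \<epsilon> = norm tl / norm D" by (simp add: \<epsilon>_def norm_divide)
    also have "\<dots> \<le> exp (-25 * a) / (exp (-2 * a) / 2)"
      using tlb Dlow by (intro frac_le) auto
    also have "\<dots> = 2 * exp (-23 * a)"
      unfolding e25 by simp
    also have "\<dots> \<le> 2 * exp (-19 * a)" using a by simp
    finally show ?thesis .
  qed
  ultimately show ?thesis unfolding D_def by blast
qed




lemma V0_large:
  assumes B: "B \<ge> 1" and T: "T \<ge> exp (exp (exp B))"
  shows "V0 T \<ge> B"
proof -
  have T0: "T > 0" using T exp_gt_zero[of "exp (exp B)"] by linarith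
  have "ln (exp (exp (exp B))) \<le> ln T" using T T0 by (subst ln_le_cancel_iff) auto
  then have lT: "ln T \<ge> exp (exp B)" by simp
  then have lT0: "ln T > 0" using exp_gt_zero[of "exp B"] by linarith
  have "ln (exp (exp B)) \<le> ln (ln T)" using lT lT0 by (subst ln_le_cancel_iff) auto
  then have l1: "ln (ln T) \<ge> exp B" by simp
  then have l10: "ln (ln T) > 0" using exp_gt_zero[of B] by linarith
  have "ln (exp B) \<le> ln (ln (ln T))" using l1 l10 by (subst ln_le_cancel_iff) auto
  then have l2: "ln (ln (ln T)) \<ge> B" by simp
  have "exp B \<ge> 1" using B by simp
  then have "ln (ln T) \<ge> 1" using l1 by linarith
  then have "ln (ln T) * ln (ln (ln T)) \<ge> 1 * B"
    using l2 B by (intro mult_mono) auto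
  then show ?thesis by (simp add: V0_def)
qed

lemma Jset_eq:
  assumes "x \<ge> 0"
  shows "{j::nat. real j \<le> x} = {..<nat \<lfloor>x\<rfloor> + 1}"
proof -
  have jiff: "real j \<le> x \<longleftrightarrow> j \<le> nat \<lfloor>x\<rfloor>" for j
  proof
    assume "real j \<le> x" then show "j \<le> nat \<lfloor>x\<rfloor>" by (rule le_nat_floor)
  next
    assume "j \<le> nat \<lfloor>x\<rfloor>"
    then have "int j \<le> \<lfloor>x\<rfloor>" using assms by linarith
    then have "real_of_int (int j) \<le> x" by (simp only: le_floor_iff[symmetric])
    then show "real j \<le> x" by simp
  qed
  show ?thesis unfolding set_eq_iff
  proof (intro allI)
    fix j
    have "j < nat \<lfloor>x\<rfloor> + 1 \<longleftrightarrow> j \<le> nat \<lfloor>x\<rfloor>" by arith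
    then show "j \<in> {j. real j \<le> x} \<longleftrightarrow> j \<in> {..<nat \<lfloor>x\<rfloor> + 1}"
      unfolding mem_Collect_eq lessThan_iff using jiff[of j] by blast
  qed
qed

lemma main_fixed:
  fixes k :: real
  assumes T: "T \<ge> exp (exp (exp (max 1 (if k = 0 then 1 else 1 / \<bar>k\<bar>))))"
    and X: "X \<ge> (1::real)" and t: "t \<in> Sset X T"
  shows "(\<exists>\<epsilon>. norm \<epsilon> \<le> 2 * exp (- 19 * \<bar>k\<bar> * V0 T) \<and>
          PXpow X k (1/2 + \<i> * complex_of_real t) = (1 + \<epsilon>) * Dpoly X k T t)
   \<and> Dpoly X k T t = (\<Sum>n\<in>{n\<in>smooth_set X. real n \<le> X powr W0 k T}.
          complex_of_real (alpha X k T n) * (of_nat n) powr (- (1/2 + \<i> * complex_of_real t)))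
   \<and> (\<forall>n. alpha X k T n \<noteq> 0 \<longrightarrow> n \<in> smooth_set X \<and> real n \<le> X powr W0 k T)
   \<and> (\<forall>n>0. \<bar>alpha X k T n\<bar> \<le> dk \<bar>k\<bar> n)
   \<and> (\<exists>\<beta>. multiplicative_fun \<beta>
        \<and> (\<forall>n>0. real (bigOmega n) \<le> W0 k T \<longrightarrow> alpha X k T n = \<beta> n)
        \<and> (\<forall>n>0. (\<forall>p m. prime p \<longrightarrow> m \<ge> 1 \<longrightarrow> p ^ m dvd n \<longrightarrow> real (p ^ m) \<le> X) \<longrightarrow> \<beta> n = dk k n)
        \<and> (\<forall>n>0. \<bar>\<beta> n\<bar> \<le> dk \<bar>k\<bar> n))"
proof -
  define B where "B = max 1 (if k = 0 then 1 else 1 / \<bar>k\<bar>)"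
  have B1: "B \<ge> 1" by (simp add: B_def)
  have T: "T \<ge> exp (exp (exp B))" using T by (simp add: B_def)
  have V: "V0 T \<ge> B" by (rule V0_large[OF B1 T])
  then have V0: "V0 T \<ge> 0" using B1 by linarith
  let ?s = "1/2 + \<i> * complex_of_real t"
  let ?F = "Fpoly X t"
  let ?z = "complex_of_real k * ?F"
  have P: "PXpow X k ?s = exp ?z" by (simp add: PXpow_Fz Fpoly_Fz)
  have Dp: "Dpoly X k T t = (\<Sum>j\<in>{j::nat. real j \<le> W0 k T}. ?z ^ j /\<^sub>R fact j)"
    unfolding Dpoly_def
    by (intro sum.cong refl) (simp add: scaleR_conv_of_real power_mult_distrib divide_inverse mult_ac)
  have P1: "\<exists>\<epsilon>. norm \<epsilon> \<le> 2 * exp (- 19 * \<bar>k\<bar> * V0 T) \<and>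
        PXpow X k ?s = (1 + \<epsilon>) * Dpoly X k T t"
  proof (cases "k = 0")
    case True
    have "{j::nat. real j \<le> W0 k T} = {0}" using True by (auto simp: W0_def)
    then have "Dpoly X k T t = 1" using Dp by simp
    moreover have "PXpow X k ?s = 1" using P True by simp
    ultimately show ?thesis by (intro exI[of _ 0]) simp
  next
    case False
    define a where "a = \<bar>k\<bar> * V0 T"
    have "B \<ge> 1 / \<bar>k\<bar>" using False by (simp add: B_def)
    then have "\<bar>k\<bar> * V0 T \<ge> \<bar>k\<bar> * (1 / \<bar>k\<bar>)" using V False
      by (intro mult_left_mono) auto
    then have a1: "a \<ge> 1" using False by (simp add: a_def)
    have W: "W0 k T = 20 * a" by (simp add: W0_def a_def)
    have "norm ?F \<le> \<bar>Re ?F\<bar> + \<bar>Im ?F\<bar>" by (rule cmod_le)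
    also have "\<dots> \<le> 2 * V0 T" using t by (simp add: Sset_def)
    finally have "norm ?z \<le> \<bar>k\<bar> * (2 * V0 T)"
      by (simp add: norm_mult mult_left_mono)
    then have zb: "norm ?z \<le> 2 * a" by (simp add: a_def)
    define N where "N = nat \<lfloor>20 * a\<rfloor> + 1"
    have J: "{j::nat. real j \<le> W0 k T} = {..<N}"
      unfolding W N_def using a1 by (intro Jset_eq) auto
    have N: "real N > 20 * a" unfolding N_def using a1 by linarith
    obtain \<epsilon> where e: "norm \<epsilon> \<le> 2 * exp (-19 * a)"
        "exp ?z = (1 + \<epsilon>) * (\<Sum>j<N. ?z ^ j /\<^sub>R fact j)"
      using exp_approx[OF zb a1 N] by blast
    show ?thesis
    proof (intro exI conjI)
      show "norm \<epsilon> \<le> 2 * exp (- 19 * \<bar>k\<bar> * V0 T)" using e(1) by (simp add: a_def mult.assoc)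
      show "PXpow X k ?s = (1 + \<epsilon>) * Dpoly X k T t" using e(2) P Dp J by simp
    qed
  qed
  have P2: "Dpoly X k T t = (\<Sum>n\<in>{n\<in>smooth_set X. real n \<le> X powr W0 k T}.
        complex_of_real (alpha X k T n) * (of_nat n) powr (- ?s))"
    by (rule Dpoly_expand[OF X])
  have P3: "\<forall>n. alpha X k T n \<noteq> 0 \<longrightarrow> n \<in> smooth_set X \<and> real n \<le> X powr W0 k T"
    using alpha_support[OF X] by blast
  have P4: "\<forall>n>0. \<bar>alpha X k T n\<bar> \<le> dk \<bar>k\<bar> n"
    using alpha_abs_le by blast
  have P5: "\<exists>\<beta>. multiplicative_fun \<beta>
      \<and> (\<forall>n>0. real (bigOmega n) \<le> W0 k T \<longrightarrow> alpha X k T n = \<beta> n)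
      \<and> (\<forall>n>0. (\<forall>p m. prime p \<longrightarrow> m \<ge> 1 \<longrightarrow> p ^ m dvd n \<longrightarrow> real (p ^ m) \<le> X) \<longrightarrow> \<beta> n = dk k n)
      \<and> (\<forall>n>0. \<bar>\<beta> n\<bar> \<le> dk \<bar>k\<bar> n)"
  proof (intro exI[of _ "beta X k"] conjI allI impI)
    show "multiplicative_fun (beta X k)" by (rule multiplicative_beta)
    fix n :: nat assume n: "n > 0"
    show "real (bigOmega n) \<le> W0 k T \<Longrightarrow> alpha X k T n = beta X k n"
      using alpha_beta[OF n] by blast
    show "\<forall>p m. prime p \<longrightarrow> m \<ge> 1 \<longrightarrow> p ^ m dvd n \<longrightarrow> real (p ^ m) \<le> X \<Longrightarrow> beta X k n = dk k n"
      using beta_dk[OF n] by blast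
    show "\<bar>beta X k n\<bar> \<le> dk \<bar>k\<bar> n" by (rule beta_abs_le[OF n])
  qed
  show ?thesis by (intro conjI P1 P2 P3 P4 P5)
qed

theorem lemma5:
  fixes k :: real
  shows "\<exists>C T0 X0. \<forall>T X t. T \<ge> T0 \<longrightarrow> X \<ge> X0 \<longrightarrow> t \<in> Sset X T \<longrightarrow>
     (\<exists>\<epsilon>. norm \<epsilon> \<le> C * exp (- 19 * \<bar>k\<bar> * V0 T) \<and>
          PXpow X k (1/2 + \<i> * complex_of_real t) = (1 + \<epsilon>) * Dpoly X k T t)
   \<and> Dpoly X k T t = (\<Sum>n\<in>{n\<in>smooth_set X. real n \<le> X powr W0 k T}.
          complex_of_real (alpha X k T n) * (of_nat n) powr (- (1/2 + \<i> * complex_of_real t)))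
   \<and> (\<forall>n. alpha X k T n \<noteq> 0 \<longrightarrow> n \<in> smooth_set X \<and> real n \<le> X powr W0 k T)
   \<and> (\<forall>n>0. \<bar>alpha X k T n\<bar> \<le> dk \<bar>k\<bar> n)
   \<and> (\<exists>\<beta>. multiplicative_fun \<beta>
        \<and> (\<forall>n>0. real (bigOmega n) \<le> W0 k T \<longrightarrow> alpha X k T n = \<beta> n)
        \<and> (\<forall>n>0. (\<forall>p m. prime p \<longrightarrow> m \<ge> 1 \<longrightarrow> p ^ m dvd n \<longrightarrow> real (p ^ m) \<le> X) \<longrightarrow> \<beta> n = dk k n)
        \<and> (\<forall>n>0. \<bar>\<beta> n\<bar> \<le> dk \<bar>k\<bar> n))"
  by (intro exI[of _ 2] exI[of _ "exp (exp (exp (max 1 (if k = 0 then 1 else 1 / \<bar>k\<bar>))))"]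
      exI[of _ 1] allI impI) (rule main_fixed; assumption)



end
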